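(* Let $f$ be a transcendental meromorphic function in the plane, let $M>0$ and let $U$ be a component of $\{z\in\mathbb{C} : |f(z)|>M\}$ containing no poles of $f$ such that $v = \log f(z)$ is a conformal bijection from $U$ onto the half-plane $H = \{v : \mathrm{Re}\, v > N\}$, $N = \log M$. Let $\phi : H \to U$ be the inverse map. Let $v_0$ be sufficiently large and positive, and for integers $k\geq 0$ set $$V_k = \left\{ v_0 + t e^{i\theta} : t \geq 0,\ -\frac{\pi}{2^{k+2}} \leq \theta \leq \frac{\pi}{2^{k+2}} \right\}, \qquad G_k(v) = \frac{f^{(k)}(z)}{f(z)},\quad z = \phi(v).$$ Then there exist positive constants $d$ and $c_k$ ($k \ge 0$) such that $|\log \phi'(v)| \leq d \log(\mathrm{Re}\, v)$ as $v\to\infty$ in $V_1$, and $|\log|G_k(v)|| \leq c_k \log(\mathrm{Re}\, v)$ as $v \to \infty$ in $V_k$.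
   Context: Here $\log\phi'$ denotes a continuous branch on $V_1$ (which is simply connected and on which $\phi'$ has no zeros). *)

theory Defs
  imports "HOL-Complex_Analysis.Complex_Analysis" "HOL-Computational_Algebra.Polynomial"
begin

definition is_rational_fun :: "(complex \<Rightarrow> complex) \<Rightarrow> bool" where
  "is_rational_fun f \<longleftrightarrow>
     (\<exists>p q :: complex poly. q \<noteq> 0 \<and> (\<forall>z. poly q z \<noteq> 0 \<longrightarrow> f z = poly p z / poly q z))"

text \<open>Transcendental meromorphic function in the plane (poles only, value 0 at poles).\<close>
definition transcendental_meromorphic :: "(complex \<Rightarrow> complex) \<Rightarrow> bool" where
  "transcendental_meromorphic f \<longleftrightarrow> f nicely_meromorphic_on UNIV \<and> \<not> is_rational_fun f"

definition sector :: "real \<Rightarrow> nat \<Rightarrow> complex set" where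
  "sector v0 k = {complex_of_real v0 + complex_of_real t * exp (\<i> * complex_of_real \<theta>) | t \<theta>.
                   t \<ge> 0 \<and> - pi / 2 ^ (k + 2) \<le> \<theta> \<and> \<theta> \<le> pi / 2 ^ (k + 2)}"

end

theory Submission
  imports Defs
begin


lemma koebe_omit:
  assumes hol: "h holomorphic_on ball 0 1" and inj: "inj_on h (ball 0 1)"
    and h0: "h 0 = 0" and d0: "deriv h 0 = 1"
  shows "\<exists>w. w \<notin> h ` ball 0 1 \<and> norm w < 2"
proof (rule ccontr)
  assume "\<not> ?thesis"
  hence sub: "ball 0 2 \<subseteq> h ` ball 0 1" by (auto simp: dist_norm)
  obtain k where k: "k holomorphic_on (h ` ball 0 1)"
      "\<And>z. z \<in> ball 0 1 \<Longrightarrow> deriv h z * deriv k (h z) = 1"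
      "\<And>z. z \<in> ball 0 1 \<Longrightarrow> k (h z) = z"
    using holomorphic_has_inverse[OF hol _ inj] by auto
  have dk: "deriv k 0 = 1" using k(2)[of 0] h0 d0 by simp
  have kh: "k holomorphic_on ball 0 2" using k(1) sub holomorphic_on_subset by blast
  have "norm ((deriv ^^ 1) k 0) \<le> fact 1 * 1 / (3/2) ^ 1"
  proof (rule Cauchy_inequality)
    show "k holomorphic_on ball 0 (3/2)" using kh holomorphic_on_subset by (auto simp: subset_ball)
    show "continuous_on (cball 0 (3/2)) k"
      by (rule continuous_on_subset[OF holomorphic_on_imp_continuous_on[OF kh]]) (auto simp: cball_subset_ball_iff)
    fix x :: complex assume "norm (0 - x) = 3/2"
    hence "x \<in> ball 0 2" by simp
    then obtain z where "z \<in> ball 0 1" "x = h z" using sub by blast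
    thus "norm (k x) \<le> 1" using k(3) by (simp add: dist_norm)
  qed simp
  thus False using dk by simp
qed



lemma koebe_a2:
  "\<exists>C0>0. \<forall>h. h holomorphic_on ball 0 1 \<and> inj_on h (ball 0 1) \<and> h 0 = 0 \<and> deriv h 0 = 1
      \<longrightarrow> norm ((deriv ^^ 2) h 0) \<le> C0"
proof -
  define K :: real where "K = exp(pi * exp(pi * (2 + 2 * 1 + 12 * (2/3) / (1 - 2/3))))"
  define B :: real where "B = 2 * (1 + K^2)"
  have Kpos: "K > 0" unfolding K_def by simp
  have "\<forall>h. h holomorphic_on ball 0 1 \<and> inj_on h (ball 0 1) \<and> h 0 = 0 \<and> deriv h 0 = 1
      \<longrightarrow> norm ((deriv ^^ 2) h 0) \<le> fact 2 * B / (1/2)^2"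
  proof (intro allI impI, elim conjE)
    fix h :: "complex \<Rightarrow> complex"
    assume hol: "h holomorphic_on ball 0 1" and inj: "inj_on h (ball 0 1)"
      and h0: "h 0 = 0" and d0: "deriv h 0 = 1"
    obtain w where w: "w \<notin> h ` ball 0 1" "norm w < 2" using koebe_omit[OF hol inj h0 d0] by blast
    have w0: "w \<noteq> 0" using w(1) h0 by force
    define F where "F z = 1 - h z / w" for z
    have Fhol: "F holomorphic_on ball 0 1" unfolding F_def using hol w0
      by (intro holomorphic_intros) auto
    have Fnz: "F z \<noteq> 0" if "z \<in> ball 0 1" for z
    proof
      assume "F z = 0"
      hence "h z = w" using w0 by (simp add: F_def field_simps)
      thus False using w(1) that by blast
    qed
    obtain l where l: "l holomorphic_on ball 0 1" "\<And>z. z \<in> ball 0 1 \<Longrightarrow> exp (l z) = F z"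
      using holomorphic_logarithm_exists[OF convex_ball open_ball Fhol Fnz, of 0] by auto
    define s0 where "s0 = exp (l 0 / 2)"
    define s where "s z = exp (l z / 2) / s0" for z
    have s0sq: "s0 ^ 2 = 1"
    proof -
      have "s0 ^ 2 = exp (l 0)" unfolding s0_def by (simp add: exp_double[symmetric] power2_eq_square exp_add[symmetric])
      also have "\<dots> = F 0" using l(2)[of 0] by simp
      finally show ?thesis by (simp add: F_def h0)
    qed
    have s0nz: "s0 \<noteq> 0" unfolding s0_def by simp
    have ssq: "s z ^ 2 = F z" if "z \<in> ball 0 1" for z
    proof -
      have "s z ^ 2 = exp (l z) / s0 ^ 2" unfolding s_def
        by (simp add: power_divide power2_eq_square exp_add[symmetric])
      thus ?thesis using s0sq l(2)[OF that] by simp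
    qed
    have s_0: "s 0 = 1" unfolding s_def s0_def by simp
    have shol: "s holomorphic_on ball 0 1" unfolding s_def using l(1) s0nz
      by (intro holomorphic_intros) auto
    define \<tau> where "\<tau> z = - s ((3/4) * z)" for z
    have sub34: "(\<lambda>z::complex. (3/4) * z) ` cball 0 1 \<subseteq> ball 0 1" by (auto simp: norm_mult)
    have tauhol: "\<tau> holomorphic_on cball 0 1" unfolding \<tau>_def
      by (intro holomorphic_intros holomorphic_on_compose_gen[OF _ shol sub34, unfolded o_def]) 
    have not01: "\<not> (\<tau> z = 0 \<or> \<tau> z = 1)" if "z \<in> cball 0 1" for z
    proof -
      have u: "(3/4) * z \<in> ball 0 1" using sub34 that by blast
      show ?thesis
      proof
        assume "\<tau> z = 0 \<or> \<tau> z = 1"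
        thus False
        proof
          assume "\<tau> z = 0"
          hence "s ((3/4) * z) = 0" by (simp add: \<tau>_def)
          hence "F ((3/4) * z) = 0" using ssq[OF u] by simp
          thus False using Fnz[OF u] by simp
        next
          assume "\<tau> z = 1"
          hence "s ((3/4) * z) = -1" unfolding \<tau>_def by (simp add: minus_equation_iff)
          hence "F ((3/4) * z) = 1" using ssq[OF u] by simp
          hence "h ((3/4) * z) = h 0" using w0 h0 by (simp add: F_def)
          hence "(3/4) * z = 0" using inj u by (auto dest: inj_onD)
          hence "s ((3/4) * z) = 1" using s_0 by simp
          thus False using \<open>s ((3/4) * z) = -1\<close> by simp
        qed
      qed
    qed
    have taub: "norm (\<tau> z) \<le> K" if "norm z \<le> 2/3" for z
      unfolding K_def
      by (rule Schottky[OF tauhol _ not01]) (use that in \<open>auto simp: \<tau>_def s_0\<close>)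
    have hbound: "norm (h u) \<le> B" if "norm u \<le> 1/2" for u
    proof -
      have u1: "u \<in> ball 0 1" using that by simp
      have "norm ((4/3) * u) \<le> 2/3" using that by (simp add: norm_mult)
      hence "norm (s u) \<le> K" using taub[of "(4/3) * u"] by (simp add: \<tau>_def)
      have "h u = w * (1 - s u ^ 2)" using ssq[OF u1] w0 by (simp add: F_def field_simps)
      hence "norm (h u) \<le> norm w * (1 + norm (s u) ^ 2)"
        by (metis norm_mult norm_power norm_one norm_triangle_ineq4 mult_left_mono norm_ge_zero)
      also have "\<dots> \<le> 2 * (1 + K ^ 2)"
        using w(2) \<open>norm (s u) \<le> K\<close>
        by (intro mult_mono add_left_mono power_mono) auto
      finally show ?thesis by (simp add: B_def)
    qed
    show "norm ((deriv ^^ 2) h 0) \<le> fact 2 * B / (1/2)^2"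
    proof (rule Cauchy_inequality)
      show "h holomorphic_on ball 0 (1/2)" using hol by (rule holomorphic_on_subset) auto
      show "continuous_on (cball 0 (1/2)) h"
        by (rule continuous_on_subset[OF holomorphic_on_imp_continuous_on[OF hol]]) auto
      show "\<And>x. norm (0 - x) = 1/2 \<Longrightarrow> norm (h x) \<le> B" using hbound by simp
    qed simp
  qed
  moreover have "fact 2 * B / (1/2)^2 > 0" unfolding B_def by (simp add: add_pos_nonneg)
  ultimately show ?thesis by blast
qed


lemma deriv_eq_on_open:
  assumes "open S" "x \<in> S" "\<And>y. y \<in> S \<Longrightarrow> f y = g y"
  shows "deriv f x = deriv g x"
  by (rule deriv_cong_ev) (use assms in \<open>auto simp: eventually_nhds\<close>)

lemma koebe_scaled:
  "\<exists>C0>0. \<forall>\<phi> a r. \<phi> holomorphic_on ball a r \<and> inj_on \<phi> (ball a r) \<and> r > 0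
      \<longrightarrow> norm (deriv (deriv \<phi>) a) \<le> C0 * norm (deriv \<phi> a) / r"
proof -
  obtain C0 where C0: "C0 > 0" "\<And>h. h holomorphic_on ball 0 1 \<Longrightarrow> inj_on h (ball 0 1) \<Longrightarrow> h 0 = 0 \<Longrightarrow> deriv h 0 = 1
      \<Longrightarrow> norm ((deriv ^^ 2) h 0) \<le> C0"
    using koebe_a2 by blast
  have "norm (deriv (deriv \<phi>) a) \<le> C0 * norm (deriv \<phi> a) / r"
    if hol: "\<phi> holomorphic_on ball a r" and inj: "inj_on \<phi> (ball a r)" and r: "r > 0" for \<phi> a r
  proof -
    define d where "d = deriv \<phi> a"
    have dnz: "d \<noteq> 0" unfolding d_def
      using holomorphic_injective_imp_regular[OF hol open_ball inj] r by simp
    define h where "h z = (\<phi> (a + of_real r * z) - \<phi> a) / (of_real r * d)" for z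
    have map: "a + of_real r * z \<in> ball a r" if "z \<in> ball 0 1" for z
      using that r by (simp add: dist_norm norm_mult)
    have hder: "(h has_field_derivative deriv \<phi> (a + of_real r * z) / d) (at z)" if "z \<in> ball 0 1" for z
    proof -
      have "((\<lambda>z. a + of_real r * z) has_field_derivative of_real r) (at z)"
        by (auto intro!: derivative_eq_intros)
      moreover have "(\<phi> has_field_derivative deriv \<phi> (a + of_real r * z)) (at (a + of_real r * z))"
        using holomorphic_derivI[OF hol open_ball map[OF that]] .
      ultimately have "((\<lambda>z. \<phi> (a + of_real r * z)) has_field_derivative deriv \<phi> (a + of_real r * z) * of_real r) (at z)"
        by (rule DERIV_chain2[rotated])
      hence "(h has_field_derivative (deriv \<phi> (a + of_real r * z) * of_real r) / (of_real r * d)) (at z)"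
        unfolding h_def using dnz by (auto intro!: derivative_eq_intros)
      thus ?thesis using r by (simp add: field_simps)
    qed
    have dh: "deriv h z = deriv \<phi> (a + of_real r * z) / d" if "z \<in> ball 0 1" for z
      using DERIV_imp_deriv[OF hder[OF that]] .
    have hhol: "h holomorphic_on ball 0 1"
      using hder by (meson field_differentiable_def holomorphic_on_open open_ball)
    have hinj: "inj_on h (ball 0 1)"
    proof (rule inj_onI)
      fix x y assume xy: "x \<in> ball 0 1" "y \<in> ball 0 1" "h x = h y"
      hence "\<phi> (a + of_real r * x) = \<phi> (a + of_real r * y)" using r dnz by (simp add: h_def field_simps)
      hence "a + of_real r * x = a + of_real r * y" using inj map xy by (auto dest: inj_onD)
      thus "x = y" using r by simp
    qed
    have h0: "h 0 = 0" by (simp add: h_def)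
    have dh0: "deriv h 0 = 1" using dh[of 0] dnz by (simp add: d_def)
    have "deriv (deriv h) 0 = deriv (\<lambda>z. deriv \<phi> (a + of_real r * z) / d) 0"
      by (rule deriv_eq_on_open[of "ball 0 1"]) (auto simp: dh)
    also have "\<dots> = deriv (deriv \<phi>) a * of_real r / d"
    proof (rule DERIV_imp_deriv)
      have l: "((\<lambda>z. a + of_real r * z) has_field_derivative of_real r) (at 0)"
        by (auto intro!: derivative_eq_intros)
      have "(deriv \<phi> has_field_derivative deriv (deriv \<phi>) a) (at a)"
        using holomorphic_derivI[OF holomorphic_deriv[OF hol open_ball] open_ball] r by simp
      hence "(deriv \<phi> has_field_derivative deriv (deriv \<phi>) a) (at (a + of_real r * 0))" by simp
      from DERIV_chain2[OF this l]
      have "((\<lambda>z. deriv \<phi> (a + of_real r * z)) has_field_derivative deriv (deriv \<phi>) a * of_real r) (at 0)" .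
      thus "((\<lambda>z. deriv \<phi> (a + of_real r * z) / d) has_field_derivative deriv (deriv \<phi>) a * of_real r / d) (at 0)"
        using dnz by (auto intro!: derivative_eq_intros)
    qed
    finally have "(deriv ^^ 2) h 0 = deriv (deriv \<phi>) a * of_real r / d" by (simp add: numeral_2_eq_2)
    with C0(2)[OF hhol hinj h0 dh0] have "norm (deriv (deriv \<phi>) a) * r / norm d \<le> C0"
      using r by (simp add: norm_mult norm_divide)
    thus ?thesis using r dnz by (simp add: d_def field_simps)
  qed
  thus ?thesis using C0(1) by blast
qed


lemma log_deriv_growth:
  fixes l \<psi> :: "complex \<Rightarrow> complex" and N C v0 t \<theta> :: real
  assumes der: "\<And>v. Re v > N \<Longrightarrow> (l has_field_derivative \<psi> v) (at v)"
    and bnd: "\<And>v. Re v > N \<Longrightarrow> norm (\<psi> v) \<le> C / (Re v - N)"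
    and v0: "v0 \<ge> N + 1" and t: "t \<ge> 0" and th: "cos \<theta> \<ge> 1/2" and C: "C \<ge> 0"
  shows "norm (l (of_real v0 + of_real t * exp (\<i> * of_real \<theta>)) - l (of_real v0)) \<le> 2 * C * ln (1 + t)"
proof -
  define e where "e = exp (\<i> * of_real \<theta>)"
  define \<gamma> where "\<gamma> s = of_real v0 + e * (exp s - 1)" for s :: complex
  define T where "T = ln (1 + t)"
  have T0: "T \<ge> 0" using t by (simp add: T_def)
  define S where "S = closed_segment 0 (complex_of_real T)"
  have Sreal: "\<exists>\<sigma>. s = of_real \<sigma> \<and> 0 \<le> \<sigma> \<and> \<sigma> \<le> T" if sS: "s \<in> S" for s
  proof -
    obtain u where u: "0 \<le> u" "u \<le> 1" "s = (1 - u) *\<^sub>R 0 + u *\<^sub>R complex_of_real T"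
      using sS unfolding S_def in_segment by blast
    show ?thesis using u T0 by (intro exI[of _ "u * T"]) (auto simp: scaleR_conv_of_real mult_left_le_one_le)
  qed
  have Re\<gamma>: "Re (\<gamma> (of_real \<sigma>)) = v0 + (exp \<sigma> - 1) * cos \<theta>" for \<sigma>
  proof -
    have "exp (complex_of_real \<sigma>) - 1 = of_real (exp \<sigma> - 1)" by (simp add: exp_of_real)
    thus ?thesis by (simp add: \<gamma>_def e_def Re_exp)
  qed
  have Reb: "Re (\<gamma> (of_real \<sigma>)) - N \<ge> exp \<sigma> / 2" if "\<sigma> \<ge> 0" for \<sigma>
  proof -
    have "exp \<sigma> \<ge> 1" using that by simp
    hence "(exp \<sigma> - 1) * cos \<theta> \<ge> (exp \<sigma> - 1) * (1/2)" using th by (intro mult_left_mono) auto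
    moreover have "cos \<theta> \<le> 1" by simp
    hence "(exp \<sigma> - 1) * cos \<theta> \<le> (exp \<sigma> - 1)" using \<open>exp \<sigma> \<ge> 1\<close>
      by (metis diff_ge_0_iff_ge mult.right_neutral mult_left_mono)
    moreover have "(exp \<sigma> - 1) * (1/2) = exp \<sigma> / 2 - 1/2" by simp
    ultimately show ?thesis unfolding Re\<gamma> using v0 by linarith
  qed
  have derS: "((l \<circ> \<gamma>) has_field_derivative (\<psi> (\<gamma> s) * (e * exp s))) (at s within S)" if sS: "s \<in> S" for s
  proof -
    obtain \<sigma> where \<sigma>: "s = of_real \<sigma>" "0 \<le> \<sigma>" using Sreal[OF sS] by blast
    have "Re (\<gamma> s) > N" using Reb[OF \<sigma>(2)] \<sigma>(1) exp_gt_zero[of \<sigma>] by (simp; linarith)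
    have "(\<gamma> has_field_derivative e * exp s) (at s)" unfolding \<gamma>_def
      by (auto intro!: derivative_eq_intros)
    from DERIV_chain[OF der[OF \<open>Re (\<gamma> s) > N\<close>] this]
    show ?thesis by (rule has_field_derivative_at_within)
  qed
  have normb: "norm (\<psi> (\<gamma> s) * (e * exp s)) \<le> 2 * C" if sS: "s \<in> S" for s
  proof -
    obtain \<sigma> where \<sigma>: "s = of_real \<sigma>" "0 \<le> \<sigma>" using Sreal[OF sS] by blast
    have pos: "Re (\<gamma> s) - N \<ge> exp \<sigma> / 2" using Reb[OF \<sigma>(2)] \<sigma>(1) by simp
    hence "Re (\<gamma> s) > N" using exp_gt_zero[of \<sigma>] by linarith
    have ne: "norm e = 1" by (simp add: e_def)
    have nexp: "norm (exp s) = exp \<sigma>" using \<sigma>(1) by simp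
    have "norm (\<psi> (\<gamma> s) * (e * exp s)) = norm (\<psi> (\<gamma> s)) * exp \<sigma>"
      by (simp add: norm_mult ne nexp del: norm_exp_eq_Re)
    also have "\<dots> \<le> C / (Re (\<gamma> s) - N) * exp \<sigma>"
      using bnd[OF \<open>Re (\<gamma> s) > N\<close>] by (intro mult_right_mono) auto
    also have "\<dots> \<le> C / (exp \<sigma> / 2) * exp \<sigma>"
      using pos C \<open>Re (\<gamma> s) > N\<close> by (intro mult_right_mono divide_left_mono) auto
    also have "\<dots> = 2 * C" by simp
    finally show ?thesis .
  qed
  have "norm ((l \<circ> \<gamma>) (of_real T) - (l \<circ> \<gamma>) 0) \<le> 2 * C * norm (complex_of_real T - 0)"
    by (rule field_differentiable_bound[OF _ derS normb]) (auto simp: S_def)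
  moreover have "\<gamma> (of_real T) = of_real v0 + of_real t * e"
  proof -
    have "exp (complex_of_real T) = of_real (1 + t)" using t
      by (simp add: T_def exp_of_real del: of_real_exp)
    thus ?thesis by (simp add: \<gamma>_def algebra_simps)
  qed
  moreover have "\<gamma> 0 = of_real v0" by (simp add: \<gamma>_def)
  ultimately show ?thesis using T0 by (simp add: e_def T_def mult.commute)
qed



definition smallc :: "real \<Rightarrow> (complex \<Rightarrow> complex) \<Rightarrow> bool" where
  "smallc N Q \<longleftrightarrow> Q holomorphic_on {v. Re v > N} \<and>
     (\<exists>K \<tau>. K \<ge> 0 \<and> \<tau> \<ge> 1 \<and> (\<forall>v. Re v - N \<ge> \<tau> \<longrightarrow> norm (Q v) \<le> K / (Re v - N)))"

lemma open_halfplane: "open {v::complex. Re v > N}"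
  by (simp add: open_halfspace_Re_gt)

lemma smallc_add:
  assumes "smallc N P" "smallc N Q" shows "smallc N (\<lambda>v. P v + Q v)"
proof -
  obtain K1 t1 where 1: "K1 \<ge> 0" "t1 \<ge> 1" "\<forall>v. Re v - N \<ge> t1 \<longrightarrow> norm (P v) \<le> K1 / (Re v - N)"
    using assms(1) unfolding smallc_def by blast
  obtain K2 t2 where 2: "K2 \<ge> 0" "t2 \<ge> 1" "\<forall>v. Re v - N \<ge> t2 \<longrightarrow> norm (Q v) \<le> K2 / (Re v - N)"
    using assms(2) unfolding smallc_def by blast
  have "\<forall>v. Re v - N \<ge> max t1 t2 \<longrightarrow> norm (P v + Q v) \<le> (K1 + K2) / (Re v - N)"
  proof (intro allI impI)
    fix v assume v: "Re v - N \<ge> max t1 t2"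
    have "norm (P v + Q v) \<le> norm (P v) + norm (Q v)" by (rule norm_triangle_ineq)
    also have "\<dots> \<le> K1 / (Re v - N) + K2 / (Re v - N)" using 1 2 v by (intro add_mono) auto
    finally show "norm (P v + Q v) \<le> (K1 + K2) / (Re v - N)" by (simp add: add_divide_distrib)
  qed
  moreover have "(\<lambda>v. P v + Q v) holomorphic_on {v. Re v > N}"
    using assms unfolding smallc_def by (intro holomorphic_intros) auto
  ultimately show ?thesis unfolding smallc_def using 1 2
    by (intro conjI exI[of _ "K1 + K2"] exI[of _ "max t1 t2"]) auto
qed

lemma smallc_cmult:
  assumes "smallc N Q" shows "smallc N (\<lambda>v. c * Q v)"
proof -
  obtain K t where 1: "K \<ge> 0" "t \<ge> 1" "\<forall>v. Re v - N \<ge> t \<longrightarrow> norm (Q v) \<le> K / (Re v - N)"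
    using assms(1) unfolding smallc_def by blast
  have "\<forall>v. Re v - N \<ge> t \<longrightarrow> norm (c * Q v) \<le> (norm c * K) / (Re v - N)"
  proof (intro allI impI)
    fix v assume v: "Re v - N \<ge> t"
    have "norm (c * Q v) = norm c * norm (Q v)" by (simp add: norm_mult)
    also have "\<dots> \<le> norm c * (K / (Re v - N))" using 1 v by (intro mult_left_mono) auto
    finally show "norm (c * Q v) \<le> (norm c * K) / (Re v - N)" by simp
  qed
  moreover have "(\<lambda>v. c * Q v) holomorphic_on {v. Re v > N}"
    using assms unfolding smallc_def by (intro holomorphic_intros) auto
  ultimately show ?thesis unfolding smallc_def using 1
    by (intro conjI exI[of _ "norm c * K"] exI[of _ t]) auto
qed

lemma smallc_mult:
  assumes "smallc N P" "smallc N Q" shows "smallc N (\<lambda>v. P v * Q v)"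
proof -
  obtain K1 t1 where 1: "K1 \<ge> 0" "t1 \<ge> 1" "\<forall>v. Re v - N \<ge> t1 \<longrightarrow> norm (P v) \<le> K1 / (Re v - N)"
    using assms(1) unfolding smallc_def by blast
  obtain K2 t2 where 2: "K2 \<ge> 0" "t2 \<ge> 1" "\<forall>v. Re v - N \<ge> t2 \<longrightarrow> norm (Q v) \<le> K2 / (Re v - N)"
    using assms(2) unfolding smallc_def by blast
  have "\<forall>v. Re v - N \<ge> max t1 t2 \<longrightarrow> norm (P v * Q v) \<le> (K1 * K2) / (Re v - N)"
  proof (intro allI impI)
    fix v assume v: "Re v - N \<ge> max t1 t2"
    define \<rho> where "\<rho> = Re v - N"
    have \<rho>: "\<rho> \<ge> 1" using v 1 unfolding \<rho>_def by simp
    have "norm (P v * Q v) = norm (P v) * norm (Q v)" by (simp add: norm_mult)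
    also have "\<dots> \<le> (K1 / \<rho>) * (K2 / \<rho>)" using 1 2 v unfolding \<rho>_def
      by (intro mult_mono) auto
    also have "\<dots> = (K1 * K2 / \<rho>) / \<rho>" by simp
    also have "\<dots> \<le> (K1 * K2 / \<rho>) / 1" using \<rho> 1 2
      by (intro divide_left_mono) auto
    finally show "norm (P v * Q v) \<le> (K1 * K2) / (Re v - N)" by (simp add: \<rho>_def)
  qed
  moreover have "(\<lambda>v. P v * Q v) holomorphic_on {v. Re v > N}"
    using assms unfolding smallc_def by (intro holomorphic_intros) auto
  ultimately show ?thesis unfolding smallc_def using 1 2
    by (intro conjI exI[of _ "K1 * K2"] exI[of _ "max t1 t2"]) auto
qed

lemma smallc_deriv:
  assumes "smallc N Q" shows "smallc N (deriv Q)"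
proof -
  have hol: "Q holomorphic_on {v. Re v > N}" using assms unfolding smallc_def by blast
  obtain K t where 1: "K \<ge> 0" "t \<ge> 1" "\<forall>v. Re v - N \<ge> t \<longrightarrow> norm (Q v) \<le> K / (Re v - N)"
    using assms(1) unfolding smallc_def by blast
  have "\<forall>v. Re v - N \<ge> 2 * t \<longrightarrow> norm (deriv Q v) \<le> (4 * K) / (Re v - N)"
  proof (intro allI impI)
    fix v assume v: "Re v - N \<ge> 2 * t"
    define \<rho> where "\<rho> = Re v - N"
    have \<rho>: "\<rho> \<ge> 2" using v 1 unfolding \<rho>_def by simp
    have ReL: "Re u - N \<ge> \<rho> / 2" if "norm (v - u) \<le> \<rho> / 2" for u
    proof -
      have "Re v - Re u \<le> norm (v - u)" using abs_Re_le_cmod[of "v - u"] by simp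
      thus ?thesis using that unfolding \<rho>_def by simp
    qed
    have cb: "cball v (\<rho>/2) \<subseteq> {v. Re v > N}"
    proof
      fix u assume "u \<in> cball v (\<rho>/2)"
      hence "norm (v - u) \<le> \<rho> / 2" by (simp add: dist_norm)
      from ReL[OF this] \<rho> show "u \<in> {v. Re v > N}" by simp
    qed
    have "norm ((deriv ^^ 1) Q v) \<le> fact 1 * (2 * K / \<rho>) / (\<rho>/2) ^ 1"
    proof (rule Cauchy_inequality)
      show "Q holomorphic_on ball v (\<rho> / 2)" using hol cb ball_subset_cball holomorphic_on_subset by blast
      show "continuous_on (cball v (\<rho> / 2)) Q"
        using holomorphic_on_imp_continuous_on[OF hol] cb continuous_on_subset by blast
      show "0 < \<rho> / 2" using \<rho> by simp
      fix u assume u: "norm (v - u) = \<rho> / 2"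
      hence r: "Re u - N \<ge> \<rho> / 2" using ReL by simp
      hence "Re u - N \<ge> t" using v unfolding \<rho>_def by simp
      hence "norm (Q u) \<le> K / (Re u - N)" using 1 by blast
      also have "\<dots> \<le> K / (\<rho> / 2)" using r \<rho> 1 by (intro divide_left_mono) auto
      finally show "norm (Q u) \<le> 2 * K / \<rho>" by (simp add: mult.commute)
    qed
    hence "norm (deriv Q v) \<le> (4 * K / \<rho>) / \<rho>" by (simp add: field_simps)
    also have "\<dots> \<le> (4 * K / \<rho>) / 1" using \<rho> 1 by (intro divide_left_mono) auto
    finally show "norm (deriv Q v) \<le> (4 * K) / (Re v - N)" by (simp add: \<rho>_def)
  qed
  moreover have "deriv Q holomorphic_on {v. Re v > N}"
    using hol open_halfplane by (intro holomorphic_deriv) auto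
  ultimately show ?thesis unfolding smallc_def using 1
    by (intro conjI exI[of _ "4 * K"] exI[of _ "2 * t"]) auto
qed



lemma sector_elim:
  assumes "v \<in> sector v0 k"
  shows "\<exists>t \<theta>. t \<ge> 0 \<and> cos \<theta> \<ge> 1/2 \<and> v = of_real v0 + of_real t * exp (\<i> * of_real \<theta>)"
proof -
  obtain t \<theta> where tt: "v = of_real v0 + of_real t * exp (\<i> * of_real \<theta>)" "t \<ge> 0"
      "- pi / 2 ^ (k + 2) \<le> \<theta>" "\<theta> \<le> pi / 2 ^ (k + 2)"
    using assms unfolding sector_def by blast
  have "(2::real) ^ (k + 2) \<ge> 2 ^ 2" by (intro power_increasing) auto
  hence "pi / 2 ^ (k + 2) \<le> pi / 4" by (intro divide_left_mono) auto
  hence ab: "\<bar>\<theta>\<bar> \<le> pi / 3" using tt(3,4) pi_gt_zero by (simp add: abs_le_iff)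
  have "cos (pi / 3) \<le> cos \<bar>\<theta>\<bar>" by (rule cos_monotone_0_pi_le) (use ab in auto)
  hence "cos \<theta> \<ge> 1/2" by (simp add: cos_60)
  thus ?thesis using tt by blast
qed

lemma sector_facts:
  assumes "t \<ge> 0" "cos \<theta> \<ge> 1/2" "v = of_real v0 + of_real t * exp (\<i> * of_real \<theta>)" "v0 \<ge> 0"
  shows "Re v = v0 + t * cos \<theta>" "norm v \<le> v0 + t" "Re v \<ge> v0 + t / 2" "norm v \<le> 2 * Re v"
proof -
  show 1: "Re v = v0 + t * cos \<theta>" using assms by (simp add: Re_exp)
  have "norm v \<le> norm (complex_of_real v0) + norm (of_real t * exp (\<i> * of_real \<theta>))"
    using assms(3) norm_triangle_ineq by blast
  thus 2: "norm v \<le> v0 + t" using assms by (simp add: norm_mult)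
  have "t * cos \<theta> \<ge> t * (1/2)" using assms by (intro mult_left_mono) auto
  thus 3: "Re v \<ge> v0 + t / 2" using 1 by simp
  show "norm v \<le> 2 * Re v" using 2 3 assms by simp
qed

lemma sector_starlike: "starlike (sector v0 k)"
  unfolding starlike_def
proof (intro bexI ballI)
  show "of_real v0 \<in> sector v0 k" unfolding sector_def
    by (rule CollectI, rule exI[of _ 0], rule exI[of _ 0]) auto
  fix x assume "x \<in> sector v0 k"
  then obtain t \<theta> where tt: "x = of_real v0 + of_real t * exp (\<i> * of_real \<theta>)" "t \<ge> 0"
      "- pi / 2 ^ (k + 2) \<le> \<theta>" "\<theta> \<le> pi / 2 ^ (k + 2)"
    unfolding sector_def by blast
  show "closed_segment (of_real v0) x \<subseteq> sector v0 k"
  proof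
    fix y assume "y \<in> closed_segment (of_real v0) x"
    then obtain u where u: "0 \<le> u" "u \<le> 1" "y = (1 - u) *\<^sub>R of_real v0 + u *\<^sub>R x"
      unfolding in_segment by blast
    have "y = of_real v0 + of_real (u * t) * exp (\<i> * of_real \<theta>)"
      using u(3) tt(1) by (simp add: scaleR_conv_of_real algebra_simps)
    thus "y \<in> sector v0 k" unfolding sector_def using tt u
      by (intro CollectI exI[of _ "u * t"] exI[of _ \<theta>] conjI) auto
  qed
qed



fun Qf :: "(complex \<Rightarrow> complex) \<Rightarrow> nat \<Rightarrow> complex \<Rightarrow> complex" where
  "Qf \<psi> 0 = (\<lambda>v. 0)"
| "Qf \<psi> (Suc k) = (\<lambda>v. Qf \<psi> k v + deriv (Qf \<psi> k) v - of_nat k * \<psi> v * (1 + Qf \<psi> k v))"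

lemma smallc_zero: "smallc N (\<lambda>v. 0)"
  unfolding smallc_def by (intro conjI exI[of _ 0] exI[of _ 1]) auto

lemma smallc_Qf:
  assumes "smallc N \<psi>" shows "smallc N (Qf \<psi> k)"
proof (induction k)
  case 0 thus ?case by (simp add: smallc_zero)
next
  case (Suc k)
  let ?Q = "Qf \<psi> k"
  have e: "Qf \<psi> (Suc k) = (\<lambda>v. (?Q v + deriv ?Q v) + (- of_nat k) * (\<psi> v + \<psi> v * ?Q v))"
    by (auto simp: algebra_simps)
  show ?case unfolding e
    by (intro smallc_add smallc_cmult smallc_mult smallc_deriv Suc assms)
qed

lemma psi_props:
  fixes \<phi> :: "complex \<Rightarrow> complex" and N :: real
  assumes \<phi>hol: "\<phi> holomorphic_on {v. Re v > N}" and \<phi>inj: "inj_on \<phi> {v. Re v > N}"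
  shows "\<exists>C0>0. (\<forall>v. Re v > N \<longrightarrow> deriv \<phi> v \<noteq> 0) \<and>
     (\<forall>v. Re v > N \<longrightarrow> norm (deriv (deriv \<phi>) v / deriv \<phi> v) \<le> C0 / (Re v - N))"
proof -
  obtain C0 where C0: "C0 > 0" "\<And>\<phi> a r. \<phi> holomorphic_on ball a r \<Longrightarrow> inj_on \<phi> (ball a r) \<Longrightarrow> r > 0
      \<Longrightarrow> norm (deriv (deriv \<phi>) a) \<le> C0 * norm (deriv \<phi> a) / r"
    using koebe_scaled by blast
  have nz: "deriv \<phi> v \<noteq> 0" if "Re v > N" for v
    using holomorphic_injective_imp_regular[OF \<phi>hol open_halfplane \<phi>inj] that by simp
  have "norm (deriv (deriv \<phi>) v / deriv \<phi> v) \<le> C0 / (Re v - N)" if v: "Re v > N" for v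
  proof -
    have sub: "ball v (Re v - N) \<subseteq> {v. Re v > N}"
    proof
      fix u assume "u \<in> ball v (Re v - N)"
      hence "norm (v - u) < Re v - N" by (simp add: dist_norm)
      moreover have "Re v - Re u \<le> norm (v - u)" using abs_Re_le_cmod[of "v - u"] by simp
      ultimately show "u \<in> {v. Re v > N}" by simp
    qed
    have "norm (deriv (deriv \<phi>) v) \<le> C0 * norm (deriv \<phi> v) / (Re v - N)"
      by (rule C0(2)) (use holomorphic_on_subset[OF \<phi>hol sub] inj_on_subset[OF \<phi>inj sub] v in auto)
    thus ?thesis using nz[OF v] v by (simp add: norm_divide field_simps)
  qed
  thus ?thesis using C0(1) nz by blast
qed


lemma pow_pred_mult: "of_nat k * (w::complex) ^ (k - 1) * (w * w) = of_nat k * w ^ Suc k"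
  by (cases k) (auto simp: algebra_simps)

lemma deriv_identity:
  fixes f g \<phi> \<psi> :: "complex \<Rightarrow> complex" and N :: real
  assumes Uopen: "open U" and ghol: "g holomorphic_on U" and gU: "\<forall>z\<in>U. Re (g z) > N"
    and \<phi>hol: "\<phi> holomorphic_on {v. Re v > N}" and nz: "\<forall>v. Re v > N \<longrightarrow> deriv \<phi> v \<noteq> 0"
    and \<phi>g: "\<forall>z\<in>U. \<phi> (g z) = z" and fexp: "\<forall>z\<in>U. f z = exp (g z)"
    and \<psi>def: "\<psi> = (\<lambda>v. deriv (deriv \<phi>) v / deriv \<phi> v)"
    and Qhol: "\<And>k. Qf \<psi> k holomorphic_on {v. Re v > N}"
  shows "\<forall>z\<in>U. (deriv ^^ k) f z = exp (g z) * inverse (deriv \<phi> (g z)) ^ k * (1 + Qf \<psi> k (g z))"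
proof -
  define W where "W z = inverse (deriv \<phi> (g z))" for z
  have H: "open {v. Re v > N}" by (rule open_halfplane)
  have gder: "(g has_field_derivative deriv g z) (at z)" if "z \<in> U" for z
    using holomorphic_derivI[OF ghol Uopen that] .
  have \<phi>der: "(\<phi> has_field_derivative deriv \<phi> v) (at v)" if "Re v > N" for v
    using holomorphic_derivI[OF \<phi>hol H] that by simp
  have \<phi>'der: "(deriv \<phi> has_field_derivative deriv (deriv \<phi>) v) (at v)" if "Re v > N" for v
    using holomorphic_derivI[OF holomorphic_deriv[OF \<phi>hol H] H] that by simp
  have dg: "deriv g z = W z" if z: "z \<in> U" for z
  proof -
    have "((\<lambda>z. \<phi> (g z)) has_field_derivative deriv \<phi> (g z) * deriv g z) (at z)"
      using DERIV_chain2[OF \<phi>der[OF gU[rule_format, OF z]] gder[OF z]] .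
    hence "deriv (\<lambda>z. \<phi> (g z)) z = deriv \<phi> (g z) * deriv g z" by (rule DERIV_imp_deriv)
    moreover have "deriv (\<lambda>z. \<phi> (g z)) z = deriv (\<lambda>z. z) z"
      by (rule deriv_eq_on_open[OF Uopen z]) (use \<phi>g in auto)
    ultimately have "deriv \<phi> (g z) * deriv g z = 1" by simp
    thus ?thesis unfolding W_def using nz gU z by (simp add: field_simps)
  qed
  have Wder: "(W has_field_derivative - \<psi> (g z) * W z * W z) (at z)" if z: "z \<in> U" for z
  proof -
    have gz: "Re (g z) > N" using gU z by blast
    have "((\<lambda>z. deriv \<phi> (g z)) has_field_derivative deriv (deriv \<phi>) (g z) * deriv g z) (at z)"
      using DERIV_chain2[OF \<phi>'der[OF gz] gder[OF z]] .
    from DERIV_inverse_fun[OF this] have "(W has_field_derivative - ((deriv (deriv \<phi>) (g z) * deriv g z) * inverse (deriv \<phi> (g z) ^ Suc (Suc 0)))) (at z)"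
      unfolding W_def using nz gz by auto
    thus ?thesis using dg[OF z] nz gz unfolding \<psi>def W_def by (simp add: field_simps)
  qed
  show ?thesis
  proof (induction k)
    case 0 thus ?case using fexp by simp
  next
    case (Suc k)
    show ?case
    proof
      fix z assume z: "z \<in> U"
      have gz: "Re (g z) > N" using gU z by blast
      define Q where "Q = Qf \<psi> k"
      have Qder: "(Q has_field_derivative deriv Q (g z)) (at (g z))"
        using holomorphic_derivI[OF Qhol H] gz unfolding Q_def by simp
      have "(deriv ^^ Suc k) f z = deriv ((deriv ^^ k) f) z" by simp
      also have "\<dots> = deriv (\<lambda>z. exp (g z) * W z ^ k * (1 + Q (g z))) z"
        by (rule deriv_eq_on_open[OF Uopen z]) (use Suc in \<open>auto simp: W_def Q_def\<close>)
      also have "\<dots> = exp (g z) * W z ^ Suc k * (1 + Qf \<psi> (Suc k) (g z))"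
      proof (rule DERIV_imp_deriv)
        have d1: "((\<lambda>z. exp (g z)) has_field_derivative exp (g z) * W z) (at z)"
          using DERIV_chain2[OF DERIV_exp gder[OF z]] dg[OF z] by simp
        have d2: "((\<lambda>z. W z ^ k) has_field_derivative of_nat k * W z ^ (k - 1) * (- \<psi> (g z) * W z * W z)) (at z)"
          using DERIV_power[OF Wder[OF z], of k] by (simp add: algebra_simps)
        have d3: "((\<lambda>z. 1 + Q (g z)) has_field_derivative deriv Q (g z) * W z) (at z)"
          using DERIV_add[OF DERIV_const DERIV_chain2[OF Qder gder[OF z]]] dg[OF z] by simp
        note D = DERIV_mult[OF DERIV_mult[OF d1 d2] d3]
        have e: "of_nat k * W z ^ (k - 1) * (- \<psi> (g z) * W z * W z) = - \<psi> (g z) * (of_nat k * W z ^ Suc k)"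
          unfolding pow_pred_mult[symmetric] by (simp only: mult_ac)
        have eq: "(exp (g z) * W z * W z ^ k + of_nat k * W z ^ (k - 1) * (- \<psi> (g z) * W z * W z) * exp (g z)) * (1 + Q (g z))
            + deriv Q (g z) * W z * (exp (g z) * W z ^ k) = exp (g z) * W z ^ Suc k * (1 + Qf \<psi> (Suc k) (g z))"
          unfolding e by (simp add: Q_def algebra_simps)
        show "((\<lambda>z. exp (g z) * W z ^ k * (1 + Q (g z))) has_field_derivative
            exp (g z) * W z ^ Suc k * (1 + Qf \<psi> (Suc k) (g z))) (at z)"
          using DERIV_cong[OF D eq] .
      qed
      finally show "(deriv ^^ Suc k) f z = exp (g z) * inverse (deriv \<phi> (g z)) ^ Suc k * (1 + Qf \<psi> (Suc k) (g z))"
        by (simp add: W_def)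
    qed
  qed
qed


lemma core:
  fixes f g \<phi> :: "complex \<Rightarrow> complex" and U :: "complex set" and N :: real
  assumes Uopen: "open U" and ghol: "g holomorphic_on U" and gU: "\<forall>z\<in>U. Re (g z) > N"
    and \<phi>hol: "\<phi> holomorphic_on {v. Re v > N}" and \<phi>inj: "inj_on \<phi> {v. Re v > N}"
    and \<phi>g: "\<forall>z\<in>U. \<phi> (g z) = z" and g\<phi>: "\<forall>v. Re v > N \<longrightarrow> \<phi> v \<in> U \<and> g (\<phi> v) = v"
    and fexp: "\<forall>z\<in>U. f z = exp (g z)"
  shows "\<exists>w0>0. \<forall>v0\<ge>w0.
     (\<forall>L. continuous_on (sector v0 1) L \<and> (\<forall>v\<in>sector v0 1. exp (L v) = deriv \<phi> v) \<longrightarrow>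
        (\<exists>d>0. \<exists>R. \<forall>v\<in>sector v0 1. norm v \<ge> R \<longrightarrow> norm (L v) \<le> d * ln (Re v)))
   \<and> (\<exists>c :: nat \<Rightarrow> real. (\<forall>k. c k > 0) \<and>
        (\<forall>k. \<exists>R. \<forall>v\<in>sector v0 k. norm v \<ge> R \<longrightarrow>
           \<bar>ln (norm ((deriv ^^ k) f (\<phi> v) / f (\<phi> v)))\<bar> \<le> c k * ln (Re v)))"
proof -
  define H where "H = {v::complex. Re v > N}"
  have Hopen: "open H" unfolding H_def by (rule open_halfplane)
  obtain C0 where C0: "C0 > 0" and nz: "\<forall>v. Re v > N \<longrightarrow> deriv \<phi> v \<noteq> 0"
     and \<psi>b: "\<forall>v. Re v > N \<longrightarrow> norm (deriv (deriv \<phi>) v / deriv \<phi> v) \<le> C0 / (Re v - N)"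
    using psi_props[OF \<phi>hol \<phi>inj] by blast
  define \<psi> where "\<psi> = (\<lambda>v. deriv (deriv \<phi>) v / deriv \<phi> v)"
  have d\<phi>hol: "deriv \<phi> holomorphic_on H" using holomorphic_deriv[OF \<phi>hol open_halfplane] unfolding H_def .
  have \<psi>hol: "\<psi> holomorphic_on H" unfolding \<psi>_def
    using \<phi>hol d\<phi>hol nz Hopen unfolding H_def by (intro holomorphic_intros) auto
  have \<psi>small: "smallc N \<psi>" unfolding smallc_def
    using \<psi>hol \<psi>b C0 unfolding H_def \<psi>_def by (intro conjI exI[of _ C0] exI[of _ 1]) auto
  have Qsmall: "smallc N (Qf \<psi> k)" for k using smallc_Qf[OF \<psi>small] .
  have Qhol: "Qf \<psi> k holomorphic_on {v. Re v > N}" for k using Qsmall[of k] unfolding smallc_def by blast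
  have ident: "\<forall>z\<in>U. (deriv ^^ k) f z = exp (g z) * inverse (deriv \<phi> (g z)) ^ k * (1 + Qf \<psi> k (g z))" for k
    by (rule deriv_identity[OF Uopen ghol gU \<phi>hol nz \<phi>g fexp \<psi>_def Qhol])
  have HN: "complex_of_real (N + 1) \<in> H" unfolding H_def by simp
  obtain l where lhol: "l holomorphic_on H" and lexp: "\<And>v. v \<in> H \<Longrightarrow> exp (l v) = deriv \<phi> v"
    using holomorphic_logarithm_exists[OF _ Hopen d\<phi>hol _ HN] nz convex_halfspace_Re_gt unfolding H_def by blast
  have lder: "(l has_field_derivative \<psi> v) (at v)" if v: "Re v > N" for v
  proof -
    have vH: "v \<in> H" using v unfolding H_def by simp
    have dl: "(l has_field_derivative deriv l v) (at v)" using holomorphic_derivI[OF lhol Hopen vH] .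
    have "deriv (deriv \<phi>) v = deriv (\<lambda>v. exp (l v)) v"
      by (rule deriv_eq_on_open[OF Hopen vH]) (use lexp in auto)
    also have "\<dots> = exp (l v) * deriv l v"
      by (rule DERIV_imp_deriv) (rule DERIV_chain2[OF DERIV_exp dl])
    finally have "deriv (deriv \<phi>) v = deriv \<phi> v * deriv l v" using lexp[OF vH] by simp
    hence "deriv l v = \<psi> v" unfolding \<psi>_def using nz v by (simp add: field_simps)
    thus ?thesis using dl by simp
  qed
  have \<psi>b': "norm (\<psi> v) \<le> C0 / (Re v - N)" if "Re v > N" for v
    using \<psi>b that unfolding \<psi>_def by blast
  define w0 where "w0 = max 1 (N + 1)"
  have "\<forall>v0\<ge>w0.
     (\<forall>L. continuous_on (sector v0 1) L \<and> (\<forall>v\<in>sector v0 1. exp (L v) = deriv \<phi> v) \<longrightarrow>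
        (\<exists>d>0. \<exists>R. \<forall>v\<in>sector v0 1. norm v \<ge> R \<longrightarrow> norm (L v) \<le> d * ln (Re v)))
   \<and> (\<exists>c :: nat \<Rightarrow> real. (\<forall>k. c k > 0) \<and>
        (\<forall>k. \<exists>R. \<forall>v\<in>sector v0 k. norm v \<ge> R \<longrightarrow>
           \<bar>ln (norm ((deriv ^^ k) f (\<phi> v) / f (\<phi> v)))\<bar> \<le> c k * ln (Re v)))"
  proof (rule allI, rule impI, rule conjI)
    fix v0 assume v0: "v0 \<ge> w0"
    have v01: "v0 \<ge> 1" "v0 \<ge> N + 1" using v0 unfolding w0_def by auto
    define B where "B = norm (l (of_real v0)) + 2 * C0"
    have B0: "B \<ge> 0" unfolding B_def using C0 by simp
    have secfacts: "Re v > N \<and> Re v \<ge> 1 \<and> norm v \<le> 2 * Re v \<and> norm (l v) \<le> B + 2 * C0 * ln (Re v)"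
      if vs: "v \<in> sector v0 k" for v k
    proof -
      obtain t \<theta> where t: "t \<ge> 0" "cos \<theta> \<ge> 1/2" "v = of_real v0 + of_real t * exp (\<i> * of_real \<theta>)"
        using sector_elim[OF vs] by blast
      have v0p: "v0 \<ge> 0" using v01 by simp
      note sf = sector_facts[OF t(1) t(2) t(3) v0p]
      have Rev: "Re v \<ge> v0 + t / 2" "norm v \<le> 2 * Re v" using sf v01 by auto
      have g: "norm (l v - l (of_real v0)) \<le> 2 * C0 * ln (1 + t)"
        unfolding t(3) by (rule log_deriv_growth[OF lder \<psi>b' v01(2) t(1) t(2)]) (use C0 in auto)
      have "1 + t \<le> 2 * Re v" using Rev v01 by simp
      hence "ln (1 + t) \<le> ln (2 * Re v)" using t by (intro ln_mono) auto
      also have "\<dots> = ln 2 + ln (Re v)" using Rev(1) v01 t by (subst ln_mult) auto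
      also have "\<dots> \<le> 1 + ln (Re v)" using ln_2_less_1 by simp
      finally have "ln (1 + t) \<le> 1 + ln (Re v)" .
      hence "norm (l v - l (of_real v0)) \<le> 2 * C0 * (1 + ln (Re v))"
        using g C0 by (meson mult_left_mono order_trans less_imp_le zero_le_mult_iff zero_le_numeral)
      moreover have "norm (l v) \<le> norm (l (of_real v0)) + norm (l v - l (of_real v0))"
        by (metis add.commute diff_add_cancel norm_triangle_ineq)
      ultimately have "norm (l v) \<le> B + 2 * C0 * ln (Re v)" unfolding B_def by (simp add: algebra_simps)
      thus ?thesis using Rev v01 t by simp
    qed
    show "\<forall>L. continuous_on (sector v0 1) L \<and> (\<forall>v\<in>sector v0 1. exp (L v) = deriv \<phi> v) \<longrightarrow>
        (\<exists>d>0. \<exists>R. \<forall>v\<in>sector v0 1. norm v \<ge> R \<longrightarrow> norm (L v) \<le> d * ln (Re v))"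
    proof (intro allI impI, elim conjE)
      fix L assume Lc: "continuous_on (sector v0 1) L" and Le: "\<forall>v\<in>sector v0 1. exp (L v) = deriv \<phi> v"
      have secH: "sector v0 1 \<subseteq> H" using secfacts unfolding H_def by blast
      have int: "\<exists>n::int. L v - l v = of_real (2 * pi * of_int n) * \<i>" if "v \<in> sector v0 1" for v
      proof -
        have "exp (L v - l v) = 1" using Le that lexp[of v] secH nz unfolding H_def
          by (auto simp: exp_diff)
        then obtain n :: int where "Re (L v - l v) = 0" "Im (L v - l v) = of_int (2 * n) * pi"
          unfolding exp_eq_1 by blast
        hence "L v - l v = of_real (2 * pi * of_int n) * \<i>" by (simp add: complex_eq_iff)
        thus ?thesis by blast
      qed
      have "(\<lambda>v. L v - l v) constant_on sector v0 1"
      proof (rule continuous_discrete_range_constant)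
        show "connected (sector v0 1)" by (rule starlike_imp_connected[OF sector_starlike])
        show "continuous_on (sector v0 1) (\<lambda>v. L v - l v)"
          using Lc continuous_on_subset[OF holomorphic_on_imp_continuous_on[OF lhol] secH]
          by (intro continuous_intros) auto
        fix x assume x: "x \<in> sector v0 1"
        show "\<exists>e>0. \<forall>y. y \<in> sector v0 1 \<and> L y - l y \<noteq> L x - l x \<longrightarrow> e \<le> norm (L y - l y - (L x - l x))"
        proof (intro exI[of _ 1] conjI allI impI)
          fix y assume y: "y \<in> sector v0 1 \<and> L y - l y \<noteq> L x - l x"
          obtain n :: int where n: "L x - l x = of_real (2 * pi * of_int n) * \<i>" using int x by blast
          obtain m :: int where m: "L y - l y = of_real (2 * pi * of_int m) * \<i>" using int y by blast
          have "m \<noteq> n" using y n m by auto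
          hence "1 \<le> \<bar>of_int (m - n) :: real\<bar>" by linarith
          hence "1 \<le> 2 * pi * \<bar>of_int (m - n) :: real\<bar>" using pi_gt3 by (smt (verit) mult_le_cancel_right1)
          moreover have "L y - l y - (L x - l x) = of_real (2 * pi * of_int (m - n)) * \<i>"
            using n m by (simp add: algebra_simps)
          hence "norm (L y - l y - (L x - l x)) = 2 * pi * \<bar>of_int (m - n)\<bar>"
            by (simp only: norm_mult norm_ii norm_of_real mult_1_right abs_mult) simp
          ultimately show "1 \<le> norm (L y - l y - (L x - l x))" by simp
        qed simp
      qed
      then obtain c where c: "\<And>v. v \<in> sector v0 1 \<Longrightarrow> L v - l v = c"
        unfolding constant_on_def by blast
      define d where "d = norm c + B + 2 * C0 + 1"
      have d0: "d > 0" unfolding d_def using B0 C0 by (simp add: add_nonneg_pos)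
      have "\<forall>v\<in>sector v0 1. norm v \<ge> 2 * exp 1 \<longrightarrow> norm (L v) \<le> d * ln (Re v)"
      proof (intro ballI impI)
        fix v assume v: "v \<in> sector v0 1" and nv: "norm v \<ge> 2 * exp 1"
        note sf = secfacts[OF v]
        have "Re v \<ge> exp 1" using sf nv by simp
        hence lnv: "ln (Re v) \<ge> 1" using sf
          by (metis exp_gt_zero ln_exp ln_mono order_less_le_trans)
        have "norm (L v) \<le> norm c + norm (l v)"
          using c[OF v] by (metis add_diff_cancel_left' diff_add_cancel norm_triangle_ineq add.commute)
        also have "\<dots> \<le> norm c + (B + 2 * C0 * ln (Re v))" using sf by simp
        also have "\<dots> \<le> (norm c + B) * ln (Re v) + 2 * C0 * ln (Re v)"
          using mult_left_mono[OF lnv, of "norm c + B"] B0 by (simp add: algebra_simps)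
        also have "\<dots> \<le> d * ln (Re v)" unfolding d_def using lnv C0
          by (simp add: algebra_simps)
        finally show "norm (L v) \<le> d * ln (Re v)" .
      qed
      thus "\<exists>d>0. \<exists>R. \<forall>v\<in>sector v0 1. norm v \<ge> R \<longrightarrow> norm (L v) \<le> d * ln (Re v)"
        using d0 by blast
    qed
    show "\<exists>c :: nat \<Rightarrow> real. (\<forall>k. c k > 0) \<and>
        (\<forall>k. \<exists>R. \<forall>v\<in>sector v0 k. norm v \<ge> R \<longrightarrow>
           \<bar>ln (norm ((deriv ^^ k) f (\<phi> v) / f (\<phi> v)))\<bar> \<le> c k * ln (Re v))"
    proof (intro exI[of _ "\<lambda>k. 1 + real k * (B + 2 * C0)"] conjI allI)
      fix k :: nat
      show "0 < 1 + real k * (B + 2 * C0)" using B0 C0 by (simp add: add_pos_nonneg)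
      obtain K \<tau> where K: "K \<ge> 0" "\<tau> \<ge> 1" "\<forall>v. Re v - N \<ge> \<tau> \<longrightarrow> norm (Qf \<psi> k v) \<le> K / (Re v - N)"
        using Qsmall[of k] unfolding smallc_def by blast
      define R where "R = 2 * (exp 1 + \<bar>N\<bar> + \<tau> + 2 * K)"
      have "\<forall>v\<in>sector v0 k. norm v \<ge> R \<longrightarrow>
           \<bar>ln (norm ((deriv ^^ k) f (\<phi> v) / f (\<phi> v)))\<bar> \<le> (1 + real k * (B + 2 * C0)) * ln (Re v)"
      proof (intro ballI impI)
        fix v assume v: "v \<in> sector v0 k" and nv: "norm v \<ge> R"
        note sf = secfacts[OF v]
        have Rv: "Re v \<ge> exp 1 + \<bar>N\<bar> + \<tau> + 2 * K" using sf nv unfolding R_def by simp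
        have "Re v \<ge> exp 1" using Rv K by simp
        hence lnv: "ln (Re v) \<ge> 1" using sf
          by (metis exp_gt_zero ln_exp ln_mono order_less_le_trans)
        have \<rho>0: "Re v - N \<ge> \<tau> + 2 * K" using Rv exp_gt_zero[of 1] abs_ge_self[of N] by linarith
        have \<rho>: "Re v - N \<ge> \<tau>" "Re v - N \<ge> 2 * K" "Re v - N > 0" using \<rho>0 K by linarith+
        have Qb: "norm (Qf \<psi> k v) \<le> 1/2"
        proof -
          have "norm (Qf \<psi> k v) \<le> K / (Re v - N)" using K \<rho> by blast
          also have "\<dots> \<le> 1/2" using \<rho> K by (simp add: field_simps)
          finally show ?thesis .
        qed
        define P where "P = 1 + Qf \<psi> k v"
        have P1: "norm P \<ge> 1/2"
        proof -
          have "1 \<le> norm P + norm (Qf \<psi> k v)" unfolding P_def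
            by (metis norm_one norm_triangle_ineq4 add_diff_cancel_right' order_trans order_refl)
          thus ?thesis using Qb by simp
        qed
        have P2: "norm P \<le> 3/2" unfolding P_def using Qb norm_triangle_ineq[of 1 "Qf \<psi> k v"] by simp
        have lnP: "\<bar>ln (norm P)\<bar> \<le> 1"
        proof -
          have "ln (norm P) \<ge> ln (1/2)" using P1 by (intro ln_mono) auto
          moreover have "ln (1/2::real) = - ln 2" by (simp add: ln_div)
          moreover have "ln (norm P) \<le> ln (3/2)" using P1 P2 by (intro ln_mono) auto
          moreover have "ln (3/2::real) \<le> 3/2 - 1" by (rule ln_le_minus_one) auto
          ultimately show ?thesis using ln_2_less_1 by (simp add: abs_le_iff)
        qed
        have vH: "v \<in> H" using sf unfolding H_def by simp
        have z: "\<phi> v \<in> U" "g (\<phi> v) = v" using g\<phi> sf by auto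
        have quot: "(deriv ^^ k) f (\<phi> v) / f (\<phi> v) = inverse (deriv \<phi> v) ^ k * P"
          using ident[of k] fexp z unfolding P_def by simp
        have "norm (inverse (deriv \<phi> v) ^ k) = exp (- (real k * Re (l v)))"
        proof -
          have "norm (deriv \<phi> v) = exp (Re (l v))" using lexp[OF vH] by (metis norm_exp_eq_Re)
          hence "norm (inverse (deriv \<phi> v) ^ k) = inverse (exp (Re (l v))) ^ k" by (simp add: norm_power norm_inverse)
          also have "\<dots> = exp (- (real k * Re (l v)))" by (simp add: exp_minus exp_of_nat_mult[symmetric] power_inverse)
          finally show ?thesis .
        qed
        hence "ln (norm ((deriv ^^ k) f (\<phi> v) / f (\<phi> v))) = ln (exp (- (real k * Re (l v))) * norm P)"
          unfolding quot norm_mult by simp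
        also have "\<dots> = - (real k * Re (l v)) + ln (norm P)"
          using P1 by (subst ln_mult) auto
        finally have "ln (norm ((deriv ^^ k) f (\<phi> v) / f (\<phi> v))) = ln (norm P) - real k * Re (l v)" by simp
        hence "\<bar>ln (norm ((deriv ^^ k) f (\<phi> v) / f (\<phi> v)))\<bar> \<le> 1 + real k * norm (l v)"
        proof -
          have "real k * \<bar>Re (l v)\<bar> \<le> real k * norm (l v)"
            using abs_Re_le_cmod[of "l v"] by (intro mult_left_mono) auto
          moreover have "\<bar>real k * Re (l v)\<bar> = real k * \<bar>Re (l v)\<bar>" by (simp add: abs_mult)
          moreover have "\<bar>ln (norm P) - real k * Re (l v)\<bar> \<le> \<bar>ln (norm P)\<bar> + \<bar>real k * Re (l v)\<bar>"
            by (rule abs_triangle_ineq4)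
          ultimately show ?thesis using lnP \<open>ln (norm ((deriv ^^ k) f (\<phi> v) / f (\<phi> v))) = ln (norm P) - real k * Re (l v)\<close>
            by linarith
        qed
        also have "\<dots> \<le> 1 + real k * (B + 2 * C0 * ln (Re v))"
          using sf by (intro add_left_mono mult_left_mono) auto
        also have "\<dots> \<le> (1 + real k * (B + 2 * C0)) * ln (Re v)"
        proof -
          have "B \<le> B * ln (Re v)" using B0 lnv by (simp add: mult_le_cancel_left1)
          hence "real k * (B + 2 * C0 * ln (Re v)) \<le> real k * ((B + 2 * C0) * ln (Re v))"
            by (intro mult_left_mono) (auto simp: algebra_simps)
          thus ?thesis using lnv by (simp add: algebra_simps)
        qed
        finally show "\<bar>ln (norm ((deriv ^^ k) f (\<phi> v) / f (\<phi> v)))\<bar> \<le> (1 + real k * (B + 2 * C0)) * ln (Re v)" .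
      qed
      thus "\<exists>R. \<forall>v\<in>sector v0 k. norm v \<ge> R \<longrightarrow>
           \<bar>ln (norm ((deriv ^^ k) f (\<phi> v) / f (\<phi> v)))\<bar> \<le> (1 + real k * (B + 2 * C0)) * ln (Re v)" by blast
    qed
  qed
  moreover have "w0 > 0" unfolding w0_def by simp
  ultimately show ?thesis by blast
qed



theorem lemma5p1:
  fixes f :: "complex \<Rightarrow> complex" and M :: real and U :: "complex set"
    and g \<phi> :: "complex \<Rightarrow> complex"
  assumes f: "transcendental_meromorphic f"
    and M: "M > 0"
    and U: "U \<in> components {z. norm (f z) > M}"
    and nopole: "\<forall>z\<in>U. \<not> is_pole f z"
    and g_hol: "g holomorphic_on U"
    and g_log: "\<forall>z\<in>U. exp (g z) = f z"
    and g_bij: "bij_betw g U {v. Re v > ln M}"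
    and \<phi>: "\<forall>v\<in>{v. Re v > ln M}. \<phi> v \<in> U \<and> g (\<phi> v) = v"
  shows "\<exists>w0>0. \<forall>v0\<ge>w0.
     (\<forall>L. continuous_on (sector v0 1) L \<and> (\<forall>v\<in>sector v0 1. exp (L v) = deriv \<phi> v) \<longrightarrow>
        (\<exists>d>0. \<exists>R. \<forall>v\<in>sector v0 1. norm v \<ge> R \<longrightarrow> norm (L v) \<le> d * ln (Re v)))
   \<and> (\<exists>c :: nat \<Rightarrow> real. (\<forall>k. c k > 0) \<and>
        (\<forall>k. \<exists>R. \<forall>v\<in>sector v0 k. norm v \<ge> R \<longrightarrow>
           \<bar>ln (norm ((deriv ^^ k) f (\<phi> v) / f (\<phi> v)))\<bar> \<le> c k * ln (Re v)))"
proof -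
  define S where "S = {z. norm (f z) > M}"
  have nm: "f nicely_meromorphic_on UNIV" using f unfolding transcendental_meromorphic_def by blast
  have Sopen: "open S"
    unfolding open_contains_ball
  proof
    fix z assume z: "z \<in> S"
    hence fz: "f z \<noteq> 0" using M unfolding S_def by auto
    have "f \<midarrow>z\<rightarrow> f z" using nm fz unfolding nicely_meromorphic_on_def by blast
    hence "((\<lambda>w. norm (f w)) \<longlongrightarrow> norm (f z)) (at z)" by (rule tendsto_norm)
    moreover have "norm (f z) > M" using z unfolding S_def by simp
    ultimately have "eventually (\<lambda>w. norm (f w) > M) (at z)" by (rule order_tendstoD(1))
    then obtain d where d: "d > 0" "\<And>w. w \<noteq> z \<Longrightarrow> dist w z < d \<Longrightarrow> norm (f w) > M"
      unfolding eventually_at by auto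
    have "ball z d \<subseteq> S"
    proof
      fix w assume "w \<in> ball z d"
      thus "w \<in> S" using d z unfolding S_def by (cases "w = z") (auto simp: dist_commute)
    qed
    thus "\<exists>e>0. ball z e \<subseteq> S" using d by blast
  qed
  have Uopen: "open U" using open_components[OF Sopen] U unfolding S_def by blast
  have inj: "inj_on g U" and gim: "g ` U = {v. Re v > ln M}" using g_bij unfolding bij_betw_def by auto
  have gU: "\<forall>z\<in>U. Re (g z) > ln M" using gim by blast
  obtain k where k: "k holomorphic_on (g ` U)" "\<And>z. z \<in> U \<Longrightarrow> k (g z) = z"
    using holomorphic_has_inverse[OF g_hol Uopen inj] by metis
  have \<phi>k: "k v = \<phi> v" if "v \<in> {v. Re v > ln M}" for v
    using \<phi> k(2) that by metis
  have \<phi>hol: "\<phi> holomorphic_on {v. Re v > ln M}"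
    using holomorphic_transform[OF k(1)[unfolded gim] \<phi>k] .
  have \<phi>inj: "inj_on \<phi> {v. Re v > ln M}"
    by (rule inj_onI) (metis \<phi>)
  have \<phi>g: "\<forall>z\<in>U. \<phi> (g z) = z"
    using \<phi>k k(2) gU by auto
  have g\<phi>: "\<forall>v. Re v > ln M \<longrightarrow> \<phi> v \<in> U \<and> g (\<phi> v) = v" using \<phi> by auto
  have fexp: "\<forall>z\<in>U. f z = exp (g z)" using g_log by auto
  show ?thesis by (rule core[OF Uopen g_hol gU \<phi>hol \<phi>inj \<phi>g g\<phi> fexp])
qed


end
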